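(* Let $k>0$, $\theta>0$, and let $X_1,\dots,X_n$ be i.i.d. samples of a gamma random variable $X$ with pdf $f(x)=\frac{x^{k-1}}{\Gamma(k)\theta^k}\exp(-x/\theta)$ for $0<x<\infty$. Let $\overline{X}_n=\frac1n\sum_{i=1}^nX_i$ and $\varDelta=\min\big\{\frac12,\frac{\mathscr{C}}{\sqrt n}(3+\frac6k)^{3/4}\big\}$, where $\mathscr{C}$ is the Berry–Esseen constant. Then $$\Pr\{\overline{X}_n\le\varrho k\theta\}\le\Big(\frac12+\varDelta\Big)\big[\varrho\exp(1-\varrho)\big]^{kn}\quad\text{for }0<\varrho\le1,$$ $$\Pr\{\overline{X}_n\ge\varrho k\theta\}\le\Big(\frac12+\varDelta\Big)\big[\varrho\exp(1-\varrho)\big]^{kn}\quad\text{for }\varrho\ge1.$$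
   Context: The Berry–Esseen constant $\mathscr{C}$ is a positive absolute constant such that for every random variable $Y$ with $\mathbb{E}[Y]=0$, $\mathbb{E}[Y^2]>0$, $\mathbb{E}[|Y|^3]<\infty$, every $n$ and every $y\in\mathbb{R}$, $|F_n(y)-\Phi(y)|\le\frac{\mathscr{C}}{\sqrt n}\frac{\mathbb{E}[|Y|^3]}{\mathbb{E}^{3/2}[Y^2]}$, where $F_n$ is the cdf of $\sum_{i=1}^nY_i/\sqrt{n\mathbb{E}[Y^2]}$ for i.i.d. copies $Y_i$ of $Y$ and $\Phi$ is the standard normal cdf. *)

theory Defs
  imports "HOL-Probability.Probability"
begin

definition gamma_density :: "real \<Rightarrow> real \<Rightarrow> real \<Rightarrow> real" where
  "gamma_density k \<theta> x =
     (if 0 < x then x powr (k - 1) / (Gamma k * \<theta> powr k) * exp (- x / \<theta>) else 0)"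

definition std_normal_cdf :: "real \<Rightarrow> real" where
  "std_normal_cdf y = measure (density lborel (\<lambda>x. ennreal (std_normal_density x))) {..y}"

definition berry_esseen_const :: "real \<Rightarrow> bool" where
  "berry_esseen_const C \<longleftrightarrow> 0 < C \<and>
    (\<forall>N :: real measure. prob_space N \<longrightarrow> sets N = sets borel \<longrightarrow>
       integrable N (\<lambda>y. \<bar>y\<bar> ^ 3) \<longrightarrow>
       integral\<^sup>L N (\<lambda>y. y) = 0 \<longrightarrow>
       0 < integral\<^sup>L N (\<lambda>y. y\<^sup>2) \<longrightarrow>
       (\<forall>n::nat. n \<ge> 1 \<longrightarrow> (\<forall>y::real.
          \<bar>measure (PiM {..<n} (\<lambda>_. N))
              {\<omega> \<in> space (PiM {..<n} (\<lambda>_. N)).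
                 (\<Sum>i<n. \<omega> i) / sqrt (real n * integral\<^sup>L N (\<lambda>y. y\<^sup>2)) \<le> y}
            - std_normal_cdf y\<bar>
          \<le> C / sqrt (real n) * integral\<^sup>L N (\<lambda>y. \<bar>y\<bar> ^ 3)
               / (integral\<^sup>L N (\<lambda>y. y\<^sup>2)) powr (3/2))))"

end

theory Submission
  imports Defs
begin

lemma gamma_density_nonneg: "0 < k \<Longrightarrow> 0 < \<theta> \<Longrightarrow> 0 \<le> gamma_density k \<theta> x"
  by (auto simp: gamma_density_def intro!: divide_nonneg_nonneg mult_nonneg_nonneg Gamma_real_nonneg)

lemma gamma_density_measurable[measurable]: "gamma_density k \<theta> \<in> borel_measurable borel"
  unfolding gamma_density_def by measurable

lemma Gamma_nn_integral:
  assumes "0 < a"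
  shows "(\<integral>\<^sup>+t. ennreal (if 0 < t then t powr (a - 1) / exp t else 0) \<partial>lborel) = ennreal (Gamma a)"
proof -
  have "((\<lambda>t. t powr (a-1) / exp t) has_integral Gamma a) {0..}"
    using Gamma_integral_real[OF assms] .
  hence h: "((\<lambda>t. if t \<in> {0..} then t powr (a-1) / exp t else 0) has_integral Gamma a) UNIV"
    by (subst has_integral_restrict_UNIV)
  have eq: "(\<lambda>t. if t \<in> {0..} then t powr (a-1) / exp t else 0) = (\<lambda>t::real. if 0 < t then t powr (a - 1) / exp t else 0)"
    by (auto simp: fun_eq_iff)
  show ?thesis
    using nn_integral_has_integral_lborel[OF _ _ h[unfolded eq]] by auto
qed

lemma gamma_moment_nn:
  assumes k: "0 < k" and th: "0 < \<theta>"
  shows "(\<integral>\<^sup>+x. ennreal (gamma_density k \<theta> x * x ^ j) \<partial>lborel) = ennreal (\<theta> ^ j * Gamma (k + j) / Gamma k)"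
proof -
  have "(\<integral>\<^sup>+x. ennreal (gamma_density k \<theta> x * x ^ j) \<partial>lborel)
     = ennreal \<bar>\<theta>\<bar> * (\<integral>\<^sup>+y. ennreal (gamma_density k \<theta> (0 + \<theta> * y) * (0 + \<theta> * y) ^ j) \<partial>lborel)"
    by (rule nn_integral_real_affine) (use th in auto)
  also have "(\<lambda>y. ennreal (gamma_density k \<theta> (0 + \<theta> * y) * (0 + \<theta> * y) ^ j))
     = (\<lambda>y. ennreal (\<theta> ^ j / (\<theta> * Gamma k)) * ennreal (if 0 < y then y powr (k + j - 1) / exp y else 0))"
  proof
    fix y :: real
    show "ennreal (gamma_density k \<theta> (0 + \<theta> * y) * (0 + \<theta> * y) ^ j) =
        ennreal (\<theta> ^ j / (\<theta> * Gamma k)) * ennreal (if 0 < y then y powr (k + j - 1) / exp y else 0)"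
    proof (cases "0 < y")
      case True
      have g: "0 < Gamma k" using k by (simp add: Gamma_real_pos)
      have "gamma_density k \<theta> (\<theta> * y) * (\<theta> * y) ^ j = \<theta> ^ j / (\<theta> * Gamma k) * (y powr (k + j - 1) / exp y)"
        using True th g
        by (simp add: gamma_density_def powr_mult powr_diff powr_add powr_realpow power_mult_distrib exp_minus field_simps)
      then show ?thesis using True th g by (simp add: ennreal_mult[symmetric])
    next
      case False
      then show ?thesis using th by (simp add: gamma_density_def zero_less_mult_iff)
    qed
  qed
  also have "ennreal \<bar>\<theta>\<bar> * (\<integral>\<^sup>+y. ennreal (\<theta> ^ j / (\<theta> * Gamma k)) * ennreal (if 0 < y then y powr (k + j - 1) / exp y else 0) \<partial>lborel)
      = ennreal \<bar>\<theta>\<bar> * (ennreal (\<theta> ^ j / (\<theta> * Gamma k)) * ennreal (Gamma (k + j)))"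
    using k by (subst nn_integral_cmult) (auto simp: Gamma_nn_integral)
  also have "\<dots> = ennreal (\<theta> ^ j * Gamma (k + j) / Gamma k)"
    using th k by (simp add: ennreal_mult[symmetric] Gamma_real_pos less_imp_le field_simps)
  finally show ?thesis .
qed

lemma gamma_moment:
  assumes k: "0 < k" and th: "0 < \<theta>"
  shows "has_bochner_integral lborel (\<lambda>x. gamma_density k \<theta> x * x ^ j) (\<theta> ^ j * Gamma (k + j) / Gamma k)"
proof (rule has_bochner_integral_nn_integral)
  show "AE x in lborel. 0 \<le> gamma_density k \<theta> x * x ^ j"
    using k by (auto simp: gamma_density_def intro!: divide_nonneg_nonneg mult_nonneg_nonneg)
  show "0 \<le> \<theta> ^ j * Gamma (k + j) / Gamma k"
    using k th by (simp add: Gamma_real_pos less_imp_le)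
qed (use gamma_moment_nn[OF k th] in auto)

lemma Gamma_ratio:
  fixes k :: real
  assumes k: "0 < k"
  shows "Gamma (k + 0) / Gamma k = 1" "Gamma (k + 1) / Gamma k = k"
    "Gamma (k + 2) / Gamma k = k * (k + 1)"
    "Gamma (k + 3) / Gamma k = k * (k + 1) * (k + 2)"
    "Gamma (k + 4) / Gamma k = k * (k + 1) * (k + 2) * (k + 3)"
proof -
  have g: "Gamma k \<noteq> 0" using Gamma_real_pos[OF k] by linarith
  have nz: "\<And>z::real. 0 < z \<Longrightarrow> z \<notin> \<int>\<^sub>\<le>\<^sub>0" using nonpos_Ints_nonpos by fastforce
  have 1: "Gamma (k + 1) = k * Gamma k" using Gamma_plus1[OF nz[OF k]] by simp
  have 2: "Gamma (k + 2) = (k + 1) * Gamma (k + 1)" using Gamma_plus1[OF nz, of "k+1"] k by (simp add: add.assoc)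
  have 3: "Gamma (k + 3) = (k + 2) * Gamma (k + 2)" using Gamma_plus1[OF nz, of "k+2"] k by (simp add: add.assoc)
  have 4: "Gamma (k + 4) = (k + 3) * Gamma (k + 3)" using Gamma_plus1[OF nz, of "k+3"] k by (simp add: add.assoc)
  show "Gamma (k + 0) / Gamma k = 1" "Gamma (k + 1) / Gamma k = k"
    "Gamma (k + 2) / Gamma k = k * (k + 1)"
    "Gamma (k + 3) / Gamma k = k * (k + 1) * (k + 2)"
    "Gamma (k + 4) / Gamma k = k * (k + 1) * (k + 2) * (k + 3)"
    using g 1 2 3 4 by (simp_all add: field_simps)
qed

lemma gamma_moments:
  assumes k: "0 < k" and th: "0 < \<theta>"
  shows "has_bochner_integral lborel (\<lambda>x. gamma_density k \<theta> x) 1"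
    "has_bochner_integral lborel (\<lambda>x. gamma_density k \<theta> x * x) (\<theta> * k)"
    "has_bochner_integral lborel (\<lambda>x. gamma_density k \<theta> x * x^2) (\<theta>^2 * (k * (k + 1)))"
    "has_bochner_integral lborel (\<lambda>x. gamma_density k \<theta> x * x^3) (\<theta>^3 * (k * (k + 1) * (k + 2)))"
    "has_bochner_integral lborel (\<lambda>x. gamma_density k \<theta> x * x^4) (\<theta>^4 * (k * (k + 1) * (k + 2) * (k + 3)))"
  using gamma_moment[OF k th, of 0] gamma_moment[OF k th, of 1] gamma_moment[OF k th, of 2]
    gamma_moment[OF k th, of 3] gamma_moment[OF k th, of 4] Gamma_ratio[OF k]
  by (simp_all add: mult.assoc times_divide_eq_right[symmetric])

lemma gamma_central:
  assumes k: "0 < k" and th: "0 < \<theta>"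
  shows "has_bochner_integral lborel (\<lambda>x. gamma_density k \<theta> x * (x - k * \<theta>)) 0"
    "has_bochner_integral lborel (\<lambda>x. gamma_density k \<theta> x * (x - k * \<theta>)^2) (k * \<theta>^2)"
    "has_bochner_integral lborel (\<lambda>x. gamma_density k \<theta> x * (x - k * \<theta>)^4) ((3 * k^2 + 6 * k) * \<theta>^4)"
proof -
  note M = gamma_moments[OF k th]
  define g where "g = gamma_density k \<theta>"
  define m where "m = k * \<theta>"
  note M = M[folded g_def]
  have "has_bochner_integral lborel (\<lambda>x. g x * x - m * g x) (\<theta> * k - m * 1)"
    by (intro has_bochner_integral_diff has_bochner_integral_mult_right M)
  moreover have "(\<lambda>x. g x * x - m * g x) = (\<lambda>x. g x * (x - m))" by (auto simp: algebra_simps)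
  ultimately show "has_bochner_integral lborel (\<lambda>x. gamma_density k \<theta> x * (x - k * \<theta>)) 0"
    by (simp add: g_def m_def mult.commute)
  have "has_bochner_integral lborel (\<lambda>x. g x * x^2 - 2 * m * (g x * x) + m^2 * g x)
      (\<theta>^2 * (k * (k + 1)) - 2 * m * (\<theta> * k) + m^2 * 1)"
    by (intro has_bochner_integral_add has_bochner_integral_diff has_bochner_integral_mult_right M)
  moreover have "(\<lambda>x. g x * x^2 - 2 * m * (g x * x) + m^2 * g x) = (\<lambda>x. g x * (x - m)^2)"
    by (auto simp: algebra_simps power2_eq_square)
  moreover have "\<theta>^2 * (k * (k + 1)) - 2 * m * (\<theta> * k) + m^2 * 1 = k * \<theta>^2"
    by (simp add: m_def algebra_simps power2_eq_square)
  ultimately show "has_bochner_integral lborel (\<lambda>x. gamma_density k \<theta> x * (x - k * \<theta>)^2) (k * \<theta>^2)"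
    by (simp add: g_def m_def)
  have "has_bochner_integral lborel (\<lambda>x. g x * x^4 - 4 * m * (g x * x^3) + 6 * m^2 * (g x * x^2) - 4 * m^3 * (g x * x) + m^4 * g x)
      (\<theta>^4 * (k * (k + 1) * (k + 2) * (k + 3)) - 4 * m * (\<theta>^3 * (k * (k + 1) * (k + 2))) + 6 * m^2 * (\<theta>^2 * (k * (k + 1))) - 4 * m^3 * (\<theta> * k) + m^4 * 1)"
    by (intro has_bochner_integral_add has_bochner_integral_diff has_bochner_integral_mult_right M)
  moreover have "(\<lambda>x. g x * x^4 - 4 * m * (g x * x^3) + 6 * m^2 * (g x * x^2) - 4 * m^3 * (g x * x) + m^4 * g x) = (\<lambda>x. g x * (x - m)^4)"
    by (auto simp: algebra_simps power2_eq_square power3_eq_cube power4_eq_xxxx)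
  moreover have "\<theta>^4 * (k * (k + 1) * (k + 2) * (k + 3)) - 4 * m * (\<theta>^3 * (k * (k + 1) * (k + 2))) + 6 * m^2 * (\<theta>^2 * (k * (k + 1))) - 4 * m^3 * (\<theta> * k) + m^4 * 1 = (3 * k^2 + 6 * k) * \<theta>^4"
    by (simp add: m_def algebra_simps power2_eq_square power3_eq_cube power4_eq_xxxx)
  ultimately show "has_bochner_integral lborel (\<lambda>x. gamma_density k \<theta> x * (x - k * \<theta>)^4) ((3 * k^2 + 6 * k) * \<theta>^4)"
    by (simp add: g_def m_def)
qed

lemma cube_bound:
  fixes y c :: real assumes c: "0 < c"
  shows "\<bar>y\<bar> ^ 3 \<le> (c * y^2 + y^4 / c) / 2"
proof -
  have "(c * y^2 + y^4 / c) / 2 - \<bar>y\<bar> ^ 3 = (y^2 / c) * (c - \<bar>y\<bar>)^2 / 2"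
    using c by (simp add: field_simps power2_eq_square power3_eq_cube power4_eq_xxxx)
  moreover have "0 \<le> (y^2 / c) * (c - \<bar>y\<bar>)^2 / 2" using c by simp
  ultimately show ?thesis by linarith
qed

lemma gamma_prob_space:
  assumes k: "0 < k" and th: "0 < \<theta>"
  shows "prob_space (density lborel (\<lambda>x. ennreal (gamma_density k \<theta> x)))"
proof (rule prob_spaceI)
  have "(\<integral>\<^sup>+x. ennreal (gamma_density k \<theta> x * x ^ 0) \<partial>lborel) = 1"
    using gamma_moment_nn[OF k th, of 0] using Gamma_real_pos[OF k] by simp
  then show "emeasure (density lborel (\<lambda>x. ennreal (gamma_density k \<theta> x))) (space (density lborel (\<lambda>x. ennreal (gamma_density k \<theta> x)))) = 1"
    by (simp add: emeasure_density)
qed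

lemma be_moments:
  assumes k: "0 < k" and th: "0 < \<theta>" and s: "\<bar>s\<bar> = 1"
  defines "N \<equiv> distr (density lborel (\<lambda>x. ennreal (gamma_density k \<theta> x))) borel (\<lambda>x. s * (x - k * \<theta>))"
  shows "prob_space N" "sets N = sets borel" "integrable N (\<lambda>y. \<bar>y\<bar> ^ 3)"
    "integral\<^sup>L N (\<lambda>y. y) = 0" "integral\<^sup>L N (\<lambda>y. y\<^sup>2) = k * \<theta>^2"
    "integral\<^sup>L N (\<lambda>y. \<bar>y\<bar> ^ 3) / (integral\<^sup>L N (\<lambda>y. y\<^sup>2)) powr (3/2) \<le> sqrt (3 + 6 / k)"
proof -
  define g where "g = gamma_density k \<theta>"
  define m where "m = k * \<theta>"
  define D where "D = density lborel (\<lambda>x. ennreal (g x))"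
  have N: "N = distr D borel (\<lambda>x. s * (x - m))" by (simp add: N_def D_def g_def m_def)
  have g_nn: "\<And>x. 0 \<le> g x" using gamma_density_nonneg[OF k th] by (simp add: g_def)
  have [measurable]: "g \<in> borel_measurable borel" by (simp add: g_def)
  interpret D: prob_space D using gamma_prob_space[OF k th] by (simp add: D_def g_def)
  show "prob_space N" unfolding N by (rule D.prob_space_distr) (simp add: D_def)
  show "sets N = sets borel" by (simp add: N)
  have "s^2 = 1" using s by (metis power2_abs power_one)
  then have s2: "\<And>x. (s * x)^2 = x^2" "\<And>x. \<bar>s * x\<bar> ^ 3 = \<bar>x\<bar> ^ 3"
    using s by (simp_all add: power_mult_distrib abs_mult)
  have int: "\<And>f. f \<in> borel_measurable borel \<Longrightarrow> integral\<^sup>L N f = integral\<^sup>L lborel (\<lambda>x. g x * f (s * (x - m)))"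
    unfolding N D_def
    by (subst integral_distr) (auto simp: integral_density g_nn)
  have intg: "\<And>f. f \<in> borel_measurable borel \<Longrightarrow> integrable N f \<longleftrightarrow> integrable lborel (\<lambda>x. g x * f (s * (x - m)))"
    unfolding N D_def
    by (subst integrable_distr_eq) (auto simp: integrable_density g_nn)
  note C = gamma_central[OF k th, folded g_def m_def]
  show "integral\<^sup>L N (\<lambda>y. y) = 0"
    using C(1) by (simp add: int has_bochner_integral_iff mult.left_commute)
  show v: "integral\<^sup>L N (\<lambda>y. y\<^sup>2) = k * \<theta>^2"
    using C(2) by (simp add: int s2 has_bochner_integral_iff)
  define K where "K = 3 + 6 / k"
  define \<sigma> where "\<sigma> = sqrt k * \<theta>"
  have \<sigma>: "0 < \<sigma>" "\<sigma>^2 = k * \<theta>^2" using k th by (simp_all add: \<sigma>_def power_mult_distrib)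
  have K: "0 < K" using k unfolding K_def by (simp add: add_pos_pos)
  define c where "c = \<sigma> * sqrt K"
  have c: "0 < c" using \<sigma> K by (simp add: c_def)
  have bnd_int: "integrable lborel (\<lambda>x. g x * ((c * (x - m)^2 + (x - m)^4 / c) / 2))"
    using C(2) C(3) by (auto simp: has_bochner_integral_iff algebra_simps intro!: integrable_divide integrable_mult_right integrable_add
         simp del: times_divide_eq_left)
  have pt0: "\<And>x. g x * \<bar>x - m\<bar> ^ 3 \<le> g x * ((c * (x - m)^2 + (x - m)^4 / c) / 2)"
    by (rule mult_left_mono[OF cube_bound[OF c] g_nn])
  have pt: "\<And>x. norm (g x * \<bar>x - m\<bar> ^ 3) \<le> norm (g x * ((c * (x - m)^2 + (x - m)^4 / c) / 2))"
  proof -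
    fix x
    have a: "\<bar>x - m\<bar> ^ 3 \<le> (c * (x - m)^2 + (x - m)^4 / c) / 2" by (rule cube_bound[OF c])
    have b: "g x * \<bar>x - m\<bar> ^ 3 \<le> g x * ((c * (x - m)^2 + (x - m)^4 / c) / 2)" by (rule mult_left_mono[OF a g_nn])
    have "0 \<le> g x * \<bar>x - m\<bar> ^ 3" using g_nn by simp
    then show "norm (g x * \<bar>x - m\<bar> ^ 3) \<le> norm (g x * ((c * (x - m)^2 + (x - m)^4 / c) / 2))"
      using b by simp
  qed
  have i3: "integrable lborel (\<lambda>x. g x * \<bar>x - m\<bar> ^ 3)"
    by (rule Bochner_Integration.integrable_bound[OF bnd_int _ always_eventually[OF allI[OF pt]]]) measurable
  show "integrable N (\<lambda>y. \<bar>y\<bar> ^ 3)" using i3 by (simp add: intg s2)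
  have "integral\<^sup>L N (\<lambda>y. \<bar>y\<bar> ^ 3) = integral\<^sup>L lborel (\<lambda>x. g x * \<bar>x - m\<bar> ^ 3)"
    by (simp add: int s2)
  also have "\<dots> \<le> integral\<^sup>L lborel (\<lambda>x. g x * ((c * (x - m)^2 + (x - m)^4 / c) / 2))"
    by (intro integral_mono i3 bnd_int pt0)
  also have "\<dots> = (c * (k * \<theta>^2) + ((3 * k^2 + 6 * k) * \<theta>^4) / c) / 2"
    using C(2) C(3) by (simp add: has_bochner_integral_iff algebra_simps del: times_divide_eq_left)
  also have "\<dots> = \<sigma>^3 * sqrt K"
  proof -
    have "(3 * k^2 + 6 * k) * \<theta>^4 = K * (k * \<theta>^2)^2" using k by (simp add: K_def field_simps power2_eq_square power4_eq_xxxx)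
    then have e2: "(3 * k^2 + 6 * k) * \<theta>^4 = K * (\<sigma>^2)^2" by (simp add: \<sigma>)
    define r where "r = sqrt K"
    have r: "0 < r" "K = r * r" using K by (simp_all add: r_def)
    have "(c * (k * \<theta>^2) + ((3 * k^2 + 6 * k) * \<theta>^4) / c) / 2
        = (\<sigma> * r * \<sigma>^2 + (r * r) * (\<sigma>^2)^2 / (\<sigma> * r)) / 2"
      unfolding e2 \<sigma>(2)[symmetric] c_def r_def[symmetric] r(2)[symmetric] ..
    also have "\<dots> = \<sigma>^3 * r"
      using r(1) \<sigma>(1) by (simp add: power2_eq_square power3_eq_cube)
    finally show ?thesis by (simp add: r_def)
  qed
  finally have a: "integral\<^sup>L N (\<lambda>y. \<bar>y\<bar> ^ 3) \<le> \<sigma>^3 * sqrt K" .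
  have b: "(integral\<^sup>L N (\<lambda>y. y\<^sup>2)) powr (3/2) = \<sigma>^3"
  proof -
    have e1: "\<sigma>^2 = \<sigma> powr 2" using \<sigma>(1) by (simp add: powr_numeral)
    have e2: "(\<sigma> powr 2) powr (3/2) = \<sigma> powr (2 * (3/2))" by (rule powr_powr)
    have e3: "\<sigma> powr (2 * (3/2)) = \<sigma>^3" using \<sigma>(1) by (simp add: powr_numeral)
    have "(\<sigma>^2) powr (3/2) = \<sigma>^3" unfolding e1 e2 e3 ..
    then show ?thesis using v \<sigma>(2) by simp
  qed
  show "integral\<^sup>L N (\<lambda>y. \<bar>y\<bar> ^ 3) / (integral\<^sup>L N (\<lambda>y. y\<^sup>2)) powr (3/2) \<le> sqrt (3 + 6 / k)"
  proof -
    have p: "0 < \<sigma>^3" using \<sigma> by simp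
    have "integral\<^sup>L N (\<lambda>y. \<bar>y\<bar> ^ 3) / \<sigma>^3 \<le> sqrt K"
      using a p by (subst pos_divide_le_eq) (auto simp: mult.commute)
    then show ?thesis using b by (simp add: K_def)
  qed
qed

lemma std_normal_cdf_0: "std_normal_cdf 0 = 1/2"
proof -
  define S where "S = density lborel (\<lambda>x. ennreal (std_normal_density x))"
  interpret S: prob_space S unfolding S_def using prob_space_normal_density by simp
  have sets[simp]: "sets S = sets borel" by (simp add: S_def)
  have "emeasure S {..0} = (\<integral>\<^sup>+x. ennreal (std_normal_density x) * indicator {..0} x \<partial>lborel)"
    unfolding S_def by (simp add: emeasure_density)
  also have "\<dots> = ennreal \<bar>-1\<bar> * (\<integral>\<^sup>+x. ennreal (std_normal_density (0 + -1 * x)) * indicator {..0} (0 + -1 * x) \<partial>lborel)"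
    by (rule nn_integral_real_affine) auto
  also have "(\<lambda>x. ennreal (std_normal_density (0 + -1 * x)) * indicator {..0::real} (0 + -1 * x)) = (\<lambda>x. ennreal (std_normal_density x) * indicator {0..} x)"
    by (auto simp: fun_eq_iff std_normal_density_def indicator_def)
  also have "ennreal \<bar>-1\<bar> * (\<integral>\<^sup>+x. ennreal (std_normal_density x) * indicator {0..} x \<partial>lborel) = emeasure S {0..}"
    unfolding S_def by (simp add: emeasure_density)
  finally have e1: "measure S {..0} = measure S {0..}" by (simp add: measure_def)
  have "emeasure S {0} = (\<integral>\<^sup>+x. ennreal (std_normal_density x) * indicator {0} x \<partial>lborel)"
    unfolding S_def by (simp add: emeasure_density)
  also have "\<dots> = 0"
    by (rule nn_integral_null_set) (auto simp: null_sets_def)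
  finally have e0: "measure S {0} = 0" by (simp add: measure_def)
  have "measure S {0..} = measure S ({0} \<union> {0<..})" by (intro arg_cong[where f="measure S"]) auto
  also have "\<dots> = measure S {0} + measure S {0<..}" by (intro S.finite_measure_Union) auto
  finally have e2: "measure S {0..} = measure S {0<..}" using e0 by simp
  have "measure S ({..0} \<union> {0<..}) = measure S {..0} + measure S {0<..}" by (intro S.finite_measure_Union) auto
  moreover have "{..0::real} \<union> {0<..} = space S" by (auto simp: S_def)
  ultimately have "measure S {..0} + measure S {0<..} = 1" using S.prob_space by simp
  then show ?thesis using e1 e2 unfolding std_normal_cdf_def S_def[symmetric] by simp
qed


lemma pim_event:
  fixes G :: "real measure" and h :: "real \<Rightarrow> real" and Q :: "real \<Rightarrow> bool" and n :: nat
  assumes G: "prob_space G" and sG: "sets G = sets borel"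
    and h[measurable]: "h \<in> borel_measurable borel" and Q[measurable]: "Measurable.pred borel Q"
  shows "measure (PiM {..<n} (\<lambda>_. distr G borel h)) {\<omega> \<in> space (PiM {..<n} (\<lambda>_. distr G borel h)). Q (\<Sum>i<n. \<omega> i)}
       = measure (PiM {1..n} (\<lambda>_. G)) {x \<in> space (PiM {1..n} (\<lambda>_. G)). Q (\<Sum>i\<in>{1..n}. h (x i))}"
proof -
  define H where "H = distr G borel h"
  have hG[measurable]: "h \<in> measurable G borel" using h by (simp add: measurable_cong_sets[OF sG refl])
  have sH: "sets H = sets borel" by (simp add: H_def)
  have hH: "h \<in> measurable G H" using hG by (simp add: measurable_cong_sets[OF refl sH])
  have H: "prob_space H" unfolding H_def by (rule prob_space.prob_space_distr[OF G hG])
  have dH: "distr G H h = H" unfolding H_def by (rule distr_cong) (simp_all add: H_def)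
  have e1: "PiM {..<n} (\<lambda>_. H) = distr (PiM {..<n} (\<lambda>_. G)) (PiM {..<n} (\<lambda>_. H)) (compose {..<n} h)"
  proof -
    have "distr (PiM {..<n} (\<lambda>_. G)) (PiM {..<n} (\<lambda>_. H)) (compose {..<n} h) = PiM {..<n} (\<lambda>_. distr G H h)"
      by (rule distr_PiM_finite_prob_space') (auto simp: G H hH)
    then show ?thesis by (simp add: dH)
  qed
  have e2: "distr (PiM {1..n} (\<lambda>_. G)) (PiM {..<n} (\<lambda>_. G)) (\<lambda>\<omega>. \<lambda>j\<in>{..<n}. \<omega> (Suc j)) = PiM {..<n} (\<lambda>_. G)"
    using distr_PiM_reindex[of "{1..n}" "\<lambda>_. G" Suc "{..<n}"] G by auto
  have m1: "compose {..<n} h \<in> measurable (PiM {..<n} (\<lambda>_. G)) (PiM {..<n} (\<lambda>_. H))"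
    unfolding compose_def by (intro measurable_restrict) (rule measurable_compose[OF measurable_component_singleton[of _ _ "\<lambda>_. G"] hH], simp)
  have m2: "(\<lambda>\<omega>. \<lambda>j\<in>{..<n}. \<omega> (Suc j)) \<in> measurable (PiM {1..n} (\<lambda>_. G)) (PiM {..<n} (\<lambda>_. G))"
    by (intro measurable_restrict measurable_component_singleton) auto
  define E where "E = {\<omega> \<in> space (PiM {..<n} (\<lambda>_. H)). Q (\<Sum>i<n. \<omega> i)}"
  have Es: "E \<in> sets (PiM {..<n} (\<lambda>_. H))"
  proof -
    have [measurable]: "(\<lambda>\<omega>. \<Sum>i<n. \<omega> i) \<in> borel_measurable (PiM {..<n} (\<lambda>_. H))"
      by (intro borel_measurable_sum measurable_component_singleton[THEN measurable_compose]) (auto simp: measurable_cong_sets[OF sH refl])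
    show ?thesis unfolding E_def by measurable
  qed
  define F where "F = compose {..<n} h -` E \<inter> space (PiM {..<n} (\<lambda>_. G))"
  have Fs: "F \<in> sets (PiM {..<n} (\<lambda>_. G))" unfolding F_def using m1 Es by (rule measurable_sets)
  have "measure (PiM {..<n} (\<lambda>_. H)) E = measure (PiM {..<n} (\<lambda>_. G)) F"
    unfolding F_def by (subst e1) (rule measure_distr[OF m1 Es])
  also have "\<dots> = measure (PiM {1..n} (\<lambda>_. G)) ((\<lambda>\<omega>. \<lambda>j\<in>{..<n}. \<omega> (Suc j)) -` F \<inter> space (PiM {1..n} (\<lambda>_. G)))"
    by (subst e2[symmetric]) (rule measure_distr[OF m2 Fs])
  also have "(\<lambda>\<omega>. \<lambda>j\<in>{..<n}. \<omega> (Suc j)) -` F \<inter> space (PiM {1..n} (\<lambda>_. G))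
      = {x \<in> space (PiM {1..n} (\<lambda>_. G)). Q (\<Sum>i\<in>{1..n}. h (x i))}"
  proof -
    have sp1: "\<And>x. x \<in> space (PiM {1..n} (\<lambda>_. G)) \<Longrightarrow> (\<lambda>j\<in>{..<n}. x (Suc j)) \<in> space (PiM {..<n} (\<lambda>_. G))"
      using m2 by (rule measurable_space)
    have sp2: "\<And>y. y \<in> space (PiM {..<n} (\<lambda>_. G)) \<Longrightarrow> compose {..<n} h y \<in> space (PiM {..<n} (\<lambda>_. H))"
      using m1 by (rule measurable_space)
    show ?thesis
    proof (rule set_eqI)
      fix x
      show "x \<in> (\<lambda>\<omega>. \<lambda>j\<in>{..<n}. \<omega> (Suc j)) -` F \<inter> space (PiM {1..n} (\<lambda>_. G))
          \<longleftrightarrow> x \<in> {x \<in> space (PiM {1..n} (\<lambda>_. G)). Q (\<Sum>i\<in>{1..n}. h (x i))}"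
      proof (cases "x \<in> space (PiM {1..n} (\<lambda>_. G))")
        case True
        note a = sp1[OF True]
        note b = sp2[OF a]
        have sm: "(\<Sum>i<n. compose {..<n} h (\<lambda>j\<in>{..<n}. x (Suc j)) i) = (\<Sum>i\<in>{1..n}. h (x i))"
          using sum.atLeast1_atMost_eq[of "\<lambda>i. h (x i)" n] by (simp add: compose_def)
        show ?thesis using True a b unfolding F_def E_def by (simp add: sm)
      qed simp
    qed
  qed
  finally show ?thesis by (simp add: E_def H_def)
qed


lemma PiM_density_lborel:
  fixes g :: "real \<Rightarrow> ennreal" and I :: "'i set"
  assumes I: "finite I" and g[measurable]: "g \<in> borel_measurable borel"
    and P: "prob_space (density lborel g)"
  shows "PiM I (\<lambda>_. density lborel g) = density (PiM I (\<lambda>_. lborel)) (\<lambda>x. \<Prod>i\<in>I. g (x i))"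
proof -
  interpret D: product_sigma_finite "\<lambda>_. density lborel g"
    unfolding product_sigma_finite_def using prob_space_imp_sigma_finite[OF P] by simp
  interpret L: product_sigma_finite "\<lambda>_::'i. lborel :: real measure"
    unfolding product_sigma_finite_def using sigma_finite_lborel by simp
  show ?thesis
  proof (rule D.PiM_eqI[OF I, symmetric])
    show "sets (density (PiM I (\<lambda>_. lborel)) (\<lambda>x. \<Prod>i\<in>I. g (x i))) = sets (PiM I (\<lambda>_. density lborel g))"
      by (simp only: sets_density) (rule sets_PiM_cong, simp_all)
  next
    fix A assume A: "\<And>i. i \<in> I \<Longrightarrow> A i \<in> sets (density lborel g)"
    have As: "Pi\<^sub>E I A \<in> sets (PiM I (\<lambda>_. lborel))"
      using A by (intro sets_PiM_I_finite I) auto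
    have "emeasure (density (PiM I (\<lambda>_. lborel)) (\<lambda>x. \<Prod>i\<in>I. g (x i))) (Pi\<^sub>E I A)
        = (\<integral>\<^sup>+x. (\<Prod>i\<in>I. g (x i)) * indicator (Pi\<^sub>E I A) x \<partial>PiM I (\<lambda>_. lborel))"
      by (rule emeasure_density[OF _ As]) measurable
    also have "\<dots> = (\<integral>\<^sup>+x. (\<Prod>i\<in>I. g (x i) * indicator (A i) (x i)) \<partial>PiM I (\<lambda>_. lborel))"
    proof (rule nn_integral_cong)
      fix x assume "x \<in> space (PiM I (\<lambda>_. lborel :: real measure))"
      then have ext: "x \<in> extensional I" by (auto simp: space_PiM PiE_def)
      have "indicator (Pi\<^sub>E I A) x = (\<Prod>i\<in>I. indicator (A i) (x i) :: ennreal)"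
      proof (cases "\<forall>i\<in>I. x i \<in> A i")
        case True
        then have "x \<in> Pi\<^sub>E I A" using ext by (auto simp: PiE_def)
        moreover have "(\<Prod>i\<in>I. indicator (A i) (x i) :: ennreal) = 1"
          using True by (intro prod.neutral) auto
        ultimately show ?thesis by simp
      next
        case False
        then obtain i where i: "i \<in> I" "x i \<notin> A i" by auto
        then have "x \<notin> Pi\<^sub>E I A" by (auto simp: PiE_def)
        moreover have "(\<Prod>i\<in>I. indicator (A i) (x i) :: ennreal) = 0"
          using i I by (intro prod_zero) (auto intro!: bexI[of _ i])
        ultimately show ?thesis by simp
      qed
      then show "(\<Prod>i\<in>I. g (x i)) * indicator (Pi\<^sub>E I A) x = (\<Prod>i\<in>I. g (x i) * indicator (A i) (x i))"
        by (simp add: prod.distrib)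
    qed
    also have "\<dots> = (\<Prod>i\<in>I. \<integral>\<^sup>+y. g y * indicator (A i) y \<partial>lborel)"
      using A by (intro L.product_nn_integral_prod I) auto
    also have "\<dots> = (\<Prod>i\<in>I. emeasure (density lborel g) (A i))"
      using A by (intro prod.cong refl) (auto simp: emeasure_density)
    finally show "emeasure (density (PiM I (\<lambda>_. lborel)) (\<lambda>x. \<Prod>i\<in>I. g (x i))) (Pi\<^sub>E I A)
        = (\<Prod>i\<in>I. emeasure (density lborel g) (A i))" .
  qed
qed


lemma M_to_PiM:
  fixes M :: "'a measure" and X :: "nat \<Rightarrow> 'a \<Rightarrow> real" and f :: "real \<Rightarrow> ennreal" and n :: nat
  assumes M: "prob_space M" and n: "1 \<le> n"
    and ind: "prob_space.indep_vars M (\<lambda>_. borel) X {1..n}"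
    and d: "\<And>i. i \<in> {1..n} \<Longrightarrow> distributed M lborel (X i) f"
    and Q[measurable]: "Measurable.pred borel Q"
  shows "measure M {\<omega> \<in> space M. Q (\<Sum>i\<in>{1..n}. X i \<omega>)}
       = measure (PiM {1..n} (\<lambda>_. density lborel f)) {x \<in> space (PiM {1..n} (\<lambda>_. density lborel f)). Q (\<Sum>i\<in>{1..n}. x i)}"
proof -
  interpret M: prob_space M by (rule M)
  define I where "I = {1..n}"
  have I: "I \<noteq> {}" "finite I" using n by (auto simp: I_def)
  have Xm: "\<And>i. i \<in> I \<Longrightarrow> X i \<in> measurable M borel"
    using d unfolding I_def distributed_def by (auto simp: measurable_cong_sets[OF refl sets_lborel])
  have e: "distr M (PiM I (\<lambda>_. borel)) (\<lambda>x. \<lambda>i\<in>I. X i x) = PiM I (\<lambda>i. distr M borel (X i))"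
    using M.indep_vars_iff_distr_eq_PiM'[where I=I and M'="\<lambda>_. borel" and X=X] I Xm ind unfolding I_def by auto
  have e2: "PiM I (\<lambda>i. distr M borel (X i)) = PiM I (\<lambda>_. density lborel f)"
  proof (rule PiM_cong[OF refl])
    fix i assume i: "i \<in> I"
    have "distr M borel (X i) = distr M lborel (X i)" by (rule distr_cong) auto
    also have "\<dots> = density lborel f" using d[of i] i by (auto simp: distributed_def I_def)
    finally show "distr M borel (X i) = density lborel f" .
  qed
  define Y where "Y = (\<lambda>x. \<lambda>i\<in>I. X i x)"
  have Ym: "Y \<in> measurable M (PiM I (\<lambda>_. borel))" unfolding Y_def using Xm by (intro measurable_restrict) auto
  define E where "E = {x \<in> space (PiM I (\<lambda>_. borel :: real measure)). Q (\<Sum>i\<in>I. x i)}"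
  have Es: "E \<in> sets (PiM I (\<lambda>_. borel))" unfolding E_def by measurable
  have sp: "space (PiM I (\<lambda>_. density lborel f)) = space (PiM I (\<lambda>_. borel :: real measure))"
    by (simp add: space_PiM)
  have "measure (PiM I (\<lambda>_. density lborel f)) E = measure (distr M (PiM I (\<lambda>_. borel)) Y) E"
    using e e2 by (simp add: Y_def)
  also have "\<dots> = measure M (Y -` E \<inter> space M)" by (rule measure_distr[OF Ym Es])
  also have "Y -` E \<inter> space M = {\<omega> \<in> space M. Q (\<Sum>i\<in>I. X i \<omega>)}"
    using measurable_space[OF Ym] by (auto simp: E_def Y_def)
  finally show ?thesis unfolding I_def[symmetric] E_def sp by simp
qed


lemma be_bound:
  assumes BE: "berry_esseen_const C" and k: "0 < k" and th: "0 < \<theta>" and s: "\<bar>s\<bar> = 1" and n: "1 \<le> n"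
  shows "measure (PiM {1..n} (\<lambda>_. density lborel (\<lambda>x. ennreal (gamma_density k \<theta> x))))
      {x \<in> space (PiM {1..n} (\<lambda>_. density lborel (\<lambda>x. ennreal (gamma_density k \<theta> x)))).
         s * (\<Sum>i\<in>{1..n}. x i) \<le> s * (real n * (k * \<theta>))}
    \<le> 1/2 + C / sqrt (real n) * sqrt (3 + 6 / k)"
proof -
  define D where "D = density lborel (\<lambda>x. ennreal (gamma_density k \<theta> x))"
  define h where "h = (\<lambda>x. s * (x - k * \<theta>))"
  define N where "N = distr D borel h"
  note BM = be_moments[OF k th s, folded D_def h_def, folded N_def]
  define V where "V = integral\<^sup>L N (\<lambda>y. y\<^sup>2)"
  have V: "V = k * \<theta>^2" "0 < V" using BM(5) k th by (simp_all add: V_def)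
  have C: "0 < C" using BE by (simp add: berry_esseen_const_def)
  have "\<bar>measure (PiM {..<n} (\<lambda>_. N))
              {\<omega> \<in> space (PiM {..<n} (\<lambda>_. N)). (\<Sum>i<n. \<omega> i) / sqrt (real n * V) \<le> 0}
            - std_normal_cdf 0\<bar>
          \<le> C / sqrt (real n) * integral\<^sup>L N (\<lambda>y. \<bar>y\<bar> ^ 3) / V powr (3/2)"
  proof -
    have Vp: "0 < integral\<^sup>L N (\<lambda>y. y\<^sup>2)" using V by (simp add: V_def)
    show ?thesis
      using BE[unfolded berry_esseen_const_def, THEN conjunct2, rule_format, OF BM(1) BM(2) BM(3) BM(4) Vp n, of 0]
      unfolding V_def .
  qed
  also have "\<dots> = C / sqrt (real n) * (integral\<^sup>L N (\<lambda>y. \<bar>y\<bar> ^ 3) / V powr (3/2))" by simp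
  also have "\<dots> \<le> C / sqrt (real n) * sqrt (3 + 6 / k)"
    using BM(6) C by (intro mult_left_mono) (simp_all add: V_def)
  finally have b: "measure (PiM {..<n} (\<lambda>_. N))
              {\<omega> \<in> space (PiM {..<n} (\<lambda>_. N)). (\<Sum>i<n. \<omega> i) / sqrt (real n * V) \<le> 0}
         \<le> 1/2 + C / sqrt (real n) * sqrt (3 + 6 / k)"
    by (simp add: std_normal_cdf_0)
  have sD: "sets D = sets borel" by (simp add: D_def)
  have PD: "prob_space D" unfolding D_def by (rule gamma_prob_space[OF k th])
  have hm: "h \<in> borel_measurable borel" unfolding h_def by measurable
  have Qm: "Measurable.pred borel (\<lambda>t::real. t / sqrt (real n * V) \<le> 0)" by measurable
  have "measure (PiM {..<n} (\<lambda>_. N))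
              {\<omega> \<in> space (PiM {..<n} (\<lambda>_. N)). (\<Sum>i<n. \<omega> i) / sqrt (real n * V) \<le> 0}
      = measure (PiM {1..n} (\<lambda>_. D)) {x \<in> space (PiM {1..n} (\<lambda>_. D)). (\<Sum>i\<in>{1..n}. h (x i)) / sqrt (real n * V) \<le> 0}"
    unfolding N_def by (rule pim_event[OF PD sD hm Qm])
  also have "{x \<in> space (PiM {1..n} (\<lambda>_. D)). (\<Sum>i\<in>{1..n}. h (x i)) / sqrt (real n * V) \<le> 0}
      = {x \<in> space (PiM {1..n} (\<lambda>_. D)). s * (\<Sum>i\<in>{1..n}. x i) \<le> s * (real n * (k * \<theta>))}"
  proof -
    have pos: "0 < sqrt (real n * V)" using n V by simp
    have "\<And>x. (\<Sum>i\<in>{1..n}. h (x i)) = s * (\<Sum>i\<in>{1..n}. x i) - s * (real n * (k * \<theta>))"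
      by (simp add: h_def sum_distrib_left[symmetric] sum_subtractf algebra_simps)
    moreover have "\<And>t. t / sqrt (real n * V) \<le> 0 \<longleftrightarrow> t \<le> 0"
      using pos by (auto simp: divide_le_0_iff)
    ultimately show ?thesis by simp
  qed
  finally show ?thesis using b by (simp add: D_def)
qed


lemma gamma_tilt:
  assumes k: "0 < k" and th: "0 < \<theta>" and r: "0 < \<rho>"
  shows "gamma_density k \<theta> x = \<rho> powr k * exp ((1 - \<rho>) / (\<rho> * \<theta>) * x) * gamma_density k (\<rho> * \<theta>) x"
proof (cases "0 < x")
  case True
  have e: "exp (- (x / \<theta>)) = exp (- (x / (\<rho> * \<theta>))) * exp ((x - \<rho> * x) / (\<rho> * \<theta>))"
    unfolding exp_add[symmetric] using r th by (intro arg_cong[where f=exp]) (simp add: field_simps)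
  have "Gamma k = 0 \<or> exp (- (x / \<theta>)) = exp (- (x / (\<rho> * \<theta>))) * exp ((x - \<rho> * x) / (\<rho> * \<theta>))"
    using e by blast
  then show ?thesis using True r th
    by (simp add: gamma_density_def powr_mult field_simps)
qed (simp add: gamma_density_def)

lemma tilt_prod:
  fixes I :: "nat set"
  assumes I: "finite I" and k: "0 < k" and th: "0 < \<theta>" and r: "0 < \<rho>"
    and S: "(1 - \<rho>) / (\<rho> * \<theta>) * (\<Sum>i\<in>I. x i) \<le> (1 - \<rho>) * k * real (card I)"
  shows "(\<Prod>i\<in>I. gamma_density k \<theta> (x i))
      \<le> (\<rho> * exp (1 - \<rho>)) powr (k * real (card I)) * (\<Prod>i\<in>I. gamma_density k (\<rho> * \<theta>) (x i))"
proof -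
  define \<beta> where "\<beta> = (1 - \<rho>) / (\<rho> * \<theta>)"
  have "(\<Prod>i\<in>I. gamma_density k \<theta> (x i))
      = (\<Prod>i\<in>I. \<rho> powr k * exp (\<beta> * x i) * gamma_density k (\<rho> * \<theta>) (x i))"
    using gamma_tilt[OF k th r] by (simp add: \<beta>_def)
  also have "\<dots> = (\<rho> powr k) ^ card I * exp (\<beta> * (\<Sum>i\<in>I. x i)) * (\<Prod>i\<in>I. gamma_density k (\<rho> * \<theta>) (x i))"
    using I by (simp add: prod.distrib exp_sum sum_distrib_left)
  also have "\<dots> \<le> (\<rho> powr k) ^ card I * exp ((1 - \<rho>) * k * real (card I)) * (\<Prod>i\<in>I. gamma_density k (\<rho> * \<theta>) (x i))"
    using S k th r by (intro mult_right_mono mult_left_mono prod_nonneg gamma_density_nonneg)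
      (auto simp: \<beta>_def mult_pos_pos)
  also have "(\<rho> powr k) ^ card I * exp ((1 - \<rho>) * k * real (card I)) = (\<rho> * exp (1 - \<rho>)) powr (k * real (card I))"
    using r by (simp add: powr_power powr_mult exp_powr_real mult.commute mult.left_commute)
  finally show ?thesis .
qed


lemma main_bound:
  fixes M :: "'a measure" and X :: "nat \<Rightarrow> 'a \<Rightarrow> real"
    and k \<theta> C \<rho> s :: real and n :: nat
  assumes M: "prob_space M"
    and BE: "berry_esseen_const C"
    and k: "0 < k" and th: "0 < \<theta>" and n: "1 \<le> n"
    and ind: "prob_space.indep_vars M (\<lambda>_. borel) X {1..n}"
    and d: "\<And>i. i \<in> {1..n} \<Longrightarrow>
           distributed M lborel (X i) (\<lambda>x. ennreal (gamma_density k \<theta> x))"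
    and r: "0 < \<rho>" and s: "\<bar>s\<bar> = 1"
    and hyp: "\<And>t. s * t \<le> s * (real n * (k * (\<rho> * \<theta>))) \<Longrightarrow> (1 - \<rho>) / (\<rho> * \<theta>) * t \<le> (1 - \<rho>) * k * real n"
  shows "measure M {\<omega> \<in> space M. s * (\<Sum>i\<in>{1..n}. X i \<omega>) \<le> s * (real n * (k * (\<rho> * \<theta>)))}
     \<le> (1/2 + min (1/2) (C / sqrt (real n) * (3 + 6 / k) powr (3/4))) * (\<rho> * exp (1 - \<rho>)) powr (k * real n)"
proof -
  define \<theta>' where "\<theta>' = \<rho> * \<theta>"
  have th': "0 < \<theta>'" using r th by (simp add: \<theta>'_def)
  define f where "f = (\<lambda>x. ennreal (gamma_density k \<theta> x))"
  define f' where "f' = (\<lambda>x. ennreal (gamma_density k \<theta>' x))"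
  define D where "D = density lborel f"
  define D' where "D' = density lborel f'"
  define I where "I = {1..n}"
  have I: "finite I" "card I = n" by (simp_all add: I_def)
  define c where "c = (\<rho> * exp (1 - \<rho>)) powr (k * real n)"
  have c: "0 \<le> c" by (simp add: c_def)
  have PD: "prob_space D" unfolding D_def f_def by (rule gamma_prob_space[OF k th])
  have PD': "prob_space D'" unfolding D'_def f'_def by (rule gamma_prob_space[OF k th'])
  have fm[measurable]: "f \<in> borel_measurable borel" "f' \<in> borel_measurable borel" by (simp_all add: f_def f'_def)
  have eD: "PiM I (\<lambda>_. D) = density (PiM I (\<lambda>_. lborel)) (\<lambda>x. \<Prod>i\<in>I. f (x i))"
    unfolding D_def by (rule PiM_density_lborel[OF I(1) fm(1) PD[unfolded D_def]])
  have eD': "PiM I (\<lambda>_. D') = density (PiM I (\<lambda>_. lborel)) (\<lambda>x. \<Prod>i\<in>I. f' (x i))"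
    unfolding D'_def by (rule PiM_density_lborel[OF I(1) fm(2) PD'[unfolded D'_def]])
  define E where "E = {x \<in> space (PiM I (\<lambda>_. lborel :: real measure)). s * (\<Sum>i\<in>I. x i) \<le> s * (real n * (k * \<theta>'))}"
  have Es: "E \<in> sets (PiM I (\<lambda>_. lborel))" unfolding E_def by measurable
  have Es'[measurable]: "E \<in> sets (PiM I (\<lambda>_. borel :: real measure))"
    using Es sets_PiM_cong[of I I "\<lambda>_. lborel :: real measure" "\<lambda>_. borel"] by simp
  have spD: "space (PiM I (\<lambda>_. D)) = space (PiM I (\<lambda>_. lborel :: real measure))"
    "space (PiM I (\<lambda>_. D')) = space (PiM I (\<lambda>_. lborel :: real measure))"
    by (simp_all add: space_PiM D_def D'_def)
  have Qm: "Measurable.pred borel (\<lambda>t::real. s * t \<le> s * (real n * (k * \<theta>')))" by measurable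
  have step1: "measure M {\<omega> \<in> space M. s * (\<Sum>i\<in>{1..n}. X i \<omega>) \<le> s * (real n * (k * (\<rho> * \<theta>)))}
      = measure (PiM I (\<lambda>_. D)) E"
  proof -
    have sp: "space (PiM {1..n} (\<lambda>_. density lborel (\<lambda>x. ennreal (gamma_density k \<theta> x)))) = space (PiM {1..n} (\<lambda>_. lborel :: real measure))"
      by (simp add: space_PiM)
    show ?thesis unfolding E_def I_def D_def f_def \<theta>'_def sp[symmetric] by (rule M_to_PiM[OF M n ind d Qm[unfolded \<theta>'_def]])
  qed
  have step2: "emeasure (PiM I (\<lambda>_. D)) E \<le> ennreal c * emeasure (PiM I (\<lambda>_. D')) E"
  proof -
    have "emeasure (PiM I (\<lambda>_. D)) E = (\<integral>\<^sup>+x. (\<Prod>i\<in>I. f (x i)) * indicator E x \<partial>PiM I (\<lambda>_. lborel))"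
      unfolding eD by (rule emeasure_density[OF _ Es]) measurable
    also have "\<dots> \<le> (\<integral>\<^sup>+x. ennreal c * ((\<Prod>i\<in>I. f' (x i)) * indicator E x) \<partial>PiM I (\<lambda>_. lborel))"
    proof (rule nn_integral_mono)
      fix x
      show "(\<Prod>i\<in>I. f (x i)) * indicator E x \<le> ennreal c * ((\<Prod>i\<in>I. f' (x i)) * indicator E x)"
      proof (cases "x \<in> E")
        case True
        then have "s * (\<Sum>i\<in>I. x i) \<le> s * (real n * (k * (\<rho> * \<theta>)))" by (simp add: E_def \<theta>'_def)
        from hyp[OF this] have h: "(1 - \<rho>) / (\<rho> * \<theta>) * (\<Sum>i\<in>I. x i) \<le> (1 - \<rho>) * k * real (card I)"
          by (simp add: I)
        have "(\<Prod>i\<in>I. gamma_density k \<theta> (x i)) \<le> c * (\<Prod>i\<in>I. gamma_density k \<theta>' (x i))"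
          using tilt_prod[OF I(1) k th r h] by (simp add: c_def I \<theta>'_def)
        moreover have "(\<Prod>i\<in>I. f (x i)) = ennreal (\<Prod>i\<in>I. gamma_density k \<theta> (x i))"
          unfolding f_def by (rule prod_ennreal) (rule gamma_density_nonneg[OF k th])
        moreover have "(\<Prod>i\<in>I. f' (x i)) = ennreal (\<Prod>i\<in>I. gamma_density k \<theta>' (x i))"
          unfolding f'_def by (rule prod_ennreal) (rule gamma_density_nonneg[OF k th'])
        ultimately show ?thesis using True c
          by (simp add: ennreal_mult[symmetric] prod_nonneg gamma_density_nonneg[OF k th'] ennreal_leI)
      qed simp
    qed
    also have "\<dots> = ennreal c * (\<integral>\<^sup>+x. (\<Prod>i\<in>I. f' (x i)) * indicator E x \<partial>PiM I (\<lambda>_. lborel))"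
      by (rule nn_integral_cmult) measurable
    also have "(\<integral>\<^sup>+x. (\<Prod>i\<in>I. f' (x i)) * indicator E x \<partial>PiM I (\<lambda>_. lborel)) = emeasure (PiM I (\<lambda>_. D')) E"
      unfolding eD' by (rule emeasure_density[OF _ Es, symmetric]) measurable
    finally show ?thesis .
  qed
  interpret PD: prob_space "PiM I (\<lambda>_. D)" by (rule prob_space_PiM) (rule PD)
  interpret PD': prob_space "PiM I (\<lambda>_. D')" by (rule prob_space_PiM) (rule PD')
  have step3: "measure (PiM I (\<lambda>_. D)) E \<le> c * measure (PiM I (\<lambda>_. D')) E"
    using step2 c by (simp add: PD.emeasure_eq_measure PD'.emeasure_eq_measure ennreal_mult[symmetric])
  have b1: "measure (PiM I (\<lambda>_. D')) E \<le> 1/2 + C / sqrt (real n) * sqrt (3 + 6 / k)"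
    using be_bound[OF BE k th' s n] unfolding E_def I_def D'_def f'_def spD(2)[symmetric, unfolded I_def D'_def f'_def] by simp
  have K1: "1 \<le> 3 + 6 / k" using k by simp
  have C: "0 \<le> C" using BE by (simp add: berry_esseen_const_def)
  have "sqrt (3 + 6 / k) \<le> (3 + 6 / k) powr (3/4)"
    using powr_mono[OF _ K1, of "1/2" "3/4"] K1 by (simp add: powr_half_sqrt)
  then have "C / sqrt (real n) * sqrt (3 + 6 / k) \<le> C / sqrt (real n) * (3 + 6 / k) powr (3/4)"
    using C by (intro mult_left_mono) auto
  with b1 have b2: "measure (PiM I (\<lambda>_. D')) E \<le> 1/2 + min (1/2) (C / sqrt (real n) * (3 + 6 / k) powr (3/4))"
    using PD'.prob_le_1[of E] by (auto simp: min_def)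
  show ?thesis
    unfolding step1 c_def[symmetric]
    using step3 mult_left_mono[OF b2 c] by (simp add: mult.commute)
qed


theorem theorem9:
  fixes M :: "'a measure" and X :: "nat \<Rightarrow> 'a \<Rightarrow> real"
    and k \<theta> C :: real and n :: nat
  assumes "prob_space M"
    and "berry_esseen_const C"
    and "0 < k" and "0 < \<theta>" and "1 \<le> n"
    and "prob_space.indep_vars M (\<lambda>_. borel) X {1..n}"
    and "\<And>i. i \<in> {1..n} \<Longrightarrow>
           distributed M lborel (X i) (\<lambda>x. ennreal (gamma_density k \<theta> x))"
  defines "\<Delta> \<equiv> min (1/2) (C / sqrt (real n) * (3 + 6 / k) powr (3/4))"
  shows "(\<forall>\<rho>. 0 < \<rho> \<and> \<rho> \<le> 1 \<longrightarrow>
           measure M {\<omega> \<in> space M. (\<Sum>i\<in>{1..n}. X i \<omega>) / real n \<le> \<rho> * k * \<theta>}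
             \<le> (1/2 + \<Delta>) * (\<rho> * exp (1 - \<rho>)) powr (k * real n)) \<and>
         (\<forall>\<rho>. 1 \<le> \<rho> \<longrightarrow>
           measure M {\<omega> \<in> space M. (\<Sum>i\<in>{1..n}. X i \<omega>) / real n \<ge> \<rho> * k * \<theta>}
             \<le> (1/2 + \<Delta>) * (\<rho> * exp (1 - \<rho>)) powr (k * real n))"
proof (intro conjI allI impI)
  note A = assms(1-7)
  have np: "0 < real n" using assms(5) by simp
  fix \<rho> :: real
  {
    assume r: "0 < \<rho> \<and> \<rho> \<le> 1"
    have hyp: "(1 - \<rho>) / (\<rho> * \<theta>) * t \<le> (1 - \<rho>) * k * real n"
      if "1 * t \<le> 1 * (real n * (k * (\<rho> * \<theta>)))" for t
    proof -
      have a: "0 \<le> (1 - \<rho>) / (\<rho> * \<theta>)" using r assms(4) by simp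
      have "(1 - \<rho>) / (\<rho> * \<theta>) * t \<le> (1 - \<rho>) / (\<rho> * \<theta>) * (real n * (k * (\<rho> * \<theta>)))"
        using that a by (intro mult_left_mono) auto
      also have "\<dots> = (1 - \<rho>) * k * real n" using r assms(4) by (simp add: field_simps)
      finally show ?thesis .
    qed
    have ev: "{\<omega> \<in> space M. (\<Sum>i\<in>{1..n}. X i \<omega>) / real n \<le> \<rho> * k * \<theta>}
        = {\<omega> \<in> space M. 1 * (\<Sum>i\<in>{1..n}. X i \<omega>) \<le> 1 * (real n * (k * (\<rho> * \<theta>)))}"
      using np by (auto simp: pos_divide_le_eq mult_ac)
    show "measure M {\<omega> \<in> space M. (\<Sum>i\<in>{1..n}. X i \<omega>) / real n \<le> \<rho> * k * \<theta>}
             \<le> (1/2 + \<Delta>) * (\<rho> * exp (1 - \<rho>)) powr (k * real n)"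
      unfolding ev \<Delta>_def using main_bound[OF A, of \<rho> 1] r hyp by simp
  }
  {
    assume r: "1 \<le> \<rho>"
    have hyp: "(1 - \<rho>) / (\<rho> * \<theta>) * t \<le> (1 - \<rho>) * k * real n"
      if "-1 * t \<le> -1 * (real n * (k * (\<rho> * \<theta>)))" for t
    proof -
      have a: "(1 - \<rho>) / (\<rho> * \<theta>) \<le> 0" using r assms(4) by (simp add: divide_le_0_iff)
      have "(1 - \<rho>) / (\<rho> * \<theta>) * t \<le> (1 - \<rho>) / (\<rho> * \<theta>) * (real n * (k * (\<rho> * \<theta>)))"
        using that a by (intro mult_left_mono_neg) auto
      also have "\<dots> = (1 - \<rho>) * k * real n" using r assms(4) by (simp add: field_simps)
      finally show ?thesis .
    qed
    have ev: "{\<omega> \<in> space M. (\<Sum>i\<in>{1..n}. X i \<omega>) / real n \<ge> \<rho> * k * \<theta>}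
        = {\<omega> \<in> space M. -1 * (\<Sum>i\<in>{1..n}. X i \<omega>) \<le> -1 * (real n * (k * (\<rho> * \<theta>)))}"
      using np by (auto simp: pos_le_divide_eq mult_ac)
    show "measure M {\<omega> \<in> space M. (\<Sum>i\<in>{1..n}. X i \<omega>) / real n \<ge> \<rho> * k * \<theta>}
             \<le> (1/2 + \<Delta>) * (\<rho> * exp (1 - \<rho>)) powr (k * real n)"
      unfolding ev \<Delta>_def using main_bound[OF A, of \<rho> "-1"] r hyp by simp
  }
qed

end
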